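(* Let $f(x)=a_nx^n+a_{n-1}x^{n-1}+\dots+a_1x+a_0\in\mathbb{Z}[x]$. Suppose that there exists a prime $p$ such that $p\nmid a_n$, $p\mid a_i$ for all $0\leq i\leq n-1$, $p^2\mid a_j$ for all $0\leq j\leq\lfloor n/2\rfloor$, and $p^3\nmid a_0$. Then: (1) if $n$ is odd, $f(x)$ is irreducible over $\mathbb{Z}$; (2) if $n$ is even, then either $f(x)$ is irreducible over $\mathbb{Z}$, or $f(x)$ is a product of exactly two irreducible polynomials in $\mathbb{Z}[x]$ of equal degree, each of which is Eisenstein with respect to $p$.
   Context: A nonconstant polynomial in $\mathbb{Z}[x]$ is called reducible over $\mathbb{Z}$ if it can be written as a product of two nonconstant polynomials in $\mathbb{Z}[x]$; otherwise it is irreducible over $\mathbb{Z}$. A polynomial $b_rx^r+\dots+b_1x+b_0\in\mathbb{Z}[x]$ of positive degree $r$ is Eisenstein with respect to a prime $p$ if $p\nmid b_r$, $p\mid b_i$ for all $0\leq i\leq r-1$, and $p^2\nmid b_0$. *)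

theory Defs
  imports "HOL-Computational_Algebra.Computational_Algebra"
begin

text \<open>Reducibility over Z in the paper's sense: a nonconstant polynomial that is a
product of two nonconstant integer polynomials. (This differs from the library
notion irreducible, which also treats constant non-unit factors.)\<close>

definition reducible_Z :: "int poly \<Rightarrow> bool" where
  "reducible_Z f \<longleftrightarrow> degree f > 0 \<and>
     (\<exists>g h. degree g > 0 \<and> degree h > 0 \<and> f = g * h)"

definition irreducible_Z :: "int poly \<Rightarrow> bool" where
  "irreducible_Z f \<longleftrightarrow> degree f > 0 \<and> \<not> reducible_Z f"

definition eisenstein_wrt :: "int \<Rightarrow> int poly \<Rightarrow> bool" where
  "eisenstein_wrt p b \<longleftrightarrow> degree b > 0 \<and> \<not> p dvd lead_coeff b \<and>
     (\<forall>i < degree b. p dvd coeff b i) \<and> \<not> p^2 dvd coeff b 0"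

end

theory Submission
  imports Defs
begin

lemma sum_split_dvd:
  fixes p :: int
  assumes "finite A" "a \<in> A" "\<not> p dvd f a" "\<forall>i\<in>A-{a}. p dvd f i"
  shows "\<not> p dvd sum f A"
proof
  assume h: "p dvd sum f A"
  have "sum f A = f a + sum f (A - {a})" using assms by (simp add: sum.remove)
  moreover have "p dvd sum f (A - {a})" using assms(4) by (intro dvd_sum) auto
  ultimately have "p dvd f a" using h by (metis dvd_add_left_iff)
  thus False using assms(3) by simp
qed

lemma low_coeffs_dvd:
  fixes g h :: "int poly" and p :: int
  assumes p: "prime p"
    and low: "\<forall>i < degree (g*h). p dvd coeff (g*h) i"
    and lc: "\<not> p dvd lead_coeff (g*h)"
  shows "\<forall>i < degree g. p dvd coeff g i"
proof -
  have gh0: "g*h \<noteq> 0" using lc by auto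
  hence g0: "g \<noteq> 0" and h0: "h \<noteq> 0" by auto
  have lcm: "lead_coeff (g*h) = lead_coeff g * lead_coeff h" by (simp add: lead_coeff_mult)
  have lg: "\<not> p dvd coeff g (degree g)" using lc lcm by auto
  have lh: "\<not> p dvd coeff h (degree h)" using lc lcm by auto
  define i0 where "i0 = (LEAST i. \<not> p dvd coeff g i)"
  define j0 where "j0 = (LEAST j. \<not> p dvd coeff h j)"
  have i0: "\<not> p dvd coeff g i0" unfolding i0_def by (rule LeastI[of _ "degree g"], rule lg)
  have j0: "\<not> p dvd coeff h j0" unfolding j0_def by (rule LeastI[of _ "degree h"], rule lh)
  have i0le: "i0 \<le> degree g" unfolding i0_def by (rule Least_le, rule lg)
  have j0le: "j0 \<le> degree h" unfolding j0_def by (rule Least_le, rule lh)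
  have bi: "p dvd coeff g i" if "i < i0" for i using not_less_Least[of i] that unfolding i0_def by blast
  have bj: "p dvd coeff h j" if "j < j0" for j using not_less_Least[of j] that unfolding j0_def by blast
  have "\<not> p dvd coeff (g*h) (i0+j0)"
    unfolding coeff_mult
  proof (rule sum_split_dvd[where a=i0])
    show "\<not> p dvd coeff g i0 * coeff h (i0 + j0 - i0)"
      using i0 j0 p by (simp add: prime_dvd_mult_iff)
    show "\<forall>i\<in>{..i0 + j0} - {i0}. p dvd coeff g i * coeff h (i0 + j0 - i)"
    proof
      fix i assume "i \<in> {..i0 + j0} - {i0}"
      hence "i < i0 \<or> (i > i0 \<and> i \<le> i0+j0)" by auto
      thus "p dvd coeff g i * coeff h (i0 + j0 - i)"
      proof
        assume "i < i0" thus ?thesis using bi by simp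
      next
        assume "i > i0 \<and> i \<le> i0+j0"
        hence "i0 + j0 - i < j0" by auto
        thus ?thesis using bj by simp
      qed
    qed
  qed auto
  hence "\<not> i0 + j0 < degree (g*h)" using low by auto
  moreover have "degree (g*h) = degree g + degree h" using g0 h0 by (simp add: degree_mult_eq)
  ultimately have "i0 = degree g" using i0le j0le by linarith
  thus ?thesis using bi by simp
qed

lemma coeff0_not_sq:
  fixes b c :: int
  assumes "prime p" "p dvd b" "p dvd c" "\<not> p^3 dvd b*c"
  shows "\<not> p^2 dvd b"
proof
  assume "p^2 dvd b"
  hence "p^2 * p dvd b * c" using assms(3) by (rule mult_dvd_mono)
  thus False using assms(4) by (simp add: power_numeral_reduce mult.assoc)
qed

lemma eis_irred:
  fixes p :: int
  assumes p: "prime p" and e: "eisenstein_wrt p g"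
  shows "irreducible_Z g"
  unfolding irreducible_Z_def reducible_Z_def
proof (intro conjI notI)
  show dg: "0 < degree g" using e unfolding eisenstein_wrt_def by auto
  assume "0 < degree g \<and> (\<exists>u v. 0 < degree u \<and> 0 < degree v \<and> g = u * v)"
  then obtain u v where u: "0 < degree u" and v: "0 < degree v" and g: "g = u*v" by auto
  have low: "\<forall>i < degree (u*v). p dvd coeff (u*v) i" and lc: "\<not> p dvd lead_coeff (u*v)"
    using e g unfolding eisenstein_wrt_def by auto
  have "p dvd coeff u 0" using low_coeffs_dvd[OF p low lc] u by auto
  moreover have "p dvd coeff v 0" using low_coeffs_dvd[OF p, of v u] low lc u v
    by (simp add: mult.commute)
  ultimately have "p*p dvd coeff u 0 * coeff v 0" by (rule mult_dvd_mono)
  hence "p^2 dvd coeff g 0" using g by (simp add: power2_eq_square coeff_mult_0)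
  thus False using e unfolding eisenstein_wrt_def by auto
qed

lemma mid_coeff:
  fixes g h :: "int poly" and p :: int
  assumes p: "prime p"
    and lg: "\<forall>i<degree g. p dvd coeff g i" and lh: "\<forall>i<degree h. p dvd coeff h i"
    and lcg: "\<not> p dvd lead_coeff g" and h0: "\<not> p^2 dvd coeff h 0"
    and lt: "degree g < degree h"
  shows "\<not> p^2 dvd coeff (g*h) (degree g)"
  unfolding coeff_mult
proof (rule sum_split_dvd[where a="degree g"])
  have cop: "coprime (p^2) (coeff g (degree g))"
    using lcg p by (simp add: prime_imp_coprime)
  hence cop': "coprime (coeff g (degree g)) (p^2)" by (simp add: coprime_commute)
  show "\<not> p^2 dvd coeff g (degree g) * coeff h (degree g - degree g)"
  proof
    assume "p^2 dvd coeff g (degree g) * coeff h (degree g - degree g)"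
    hence "p^2 dvd coeff h 0" using cop coprime_dvd_mult_right_iff[of "p^2" "coeff g (degree g)"] by auto
    thus False using h0 by simp
  qed
  show "\<forall>i\<in>{..degree g} - {degree g}. p^2 dvd coeff g i * coeff h (degree g - i)"
  proof
    fix i assume "i \<in> {..degree g} - {degree g}"
    hence i: "i < degree g" by auto
    hence "p dvd coeff g i" using lg by auto
    moreover have "p dvd coeff h (degree g - i)" using lh i lt by auto
    ultimately have "p*p dvd coeff g i * coeff h (degree g - i)" by (rule mult_dvd_mono)
    thus "p^2 dvd coeff g i * coeff h (degree g - i)" by (simp add: power2_eq_square)
  qed
qed auto

theorem theorem2p2:
  fixes f :: "int poly" and p :: int and n :: nat
  assumes "degree f = n"
    and "prime p"
    and "\<not> p dvd coeff f n"
    and "\<forall>i < n. p dvd coeff f i"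
    and "\<forall>j \<le> n div 2. p^2 dvd coeff f j"
    and "\<not> p^3 dvd coeff f 0"
  shows "(odd n \<longrightarrow> irreducible_Z f) \<and>
         (even n \<longrightarrow> irreducible_Z f \<or>
            (\<exists>g h. f = g * h \<and> irreducible_Z g \<and> irreducible_Z h \<and>
                   degree g = degree h \<and> eisenstein_wrt p g \<and> eisenstein_wrt p h))"
proof (cases "irreducible_Z f")
  case True thus ?thesis by auto
next
  case False
  have n0: "n > 0"
  proof (rule ccontr)
    assume "\<not> n > 0" hence "n = 0" by simp
    thus False using assms(3,5) by (auto simp: dvd_power_le intro: dvd_trans[of p "p^2"])
  qed
  then obtain g h where dg: "0 < degree g" and dh: "0 < degree h" and f: "f = g*h"
    using False assms(1) unfolding irreducible_Z_def reducible_Z_def by auto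
  have p: "prime p" by fact
  have f0: "f \<noteq> 0" using assms(3) by auto
  hence "g \<noteq> 0" "h \<noteq> 0" using f by auto
  hence deg: "degree g + degree h = n" using assms(1) f by (simp add: degree_mult_eq)
  have low: "\<forall>i < degree (g*h). p dvd coeff (g*h) i" using assms(1,4) f by simp
  have lc: "\<not> p dvd lead_coeff (g*h)" using assms(1,3) f by simp
  have lg: "\<forall>i<degree g. p dvd coeff g i" using low_coeffs_dvd[OF p low lc] .
  have lh: "\<forall>i<degree h. p dvd coeff h i" using low_coeffs_dvd[OF p, of h g] low lc
    by (simp add: mult.commute)
  have lcm: "lead_coeff (g*h) = lead_coeff g * lead_coeff h" by (simp add: lead_coeff_mult)
  have lcg: "\<not> p dvd lead_coeff g" and lch: "\<not> p dvd lead_coeff h" using lc lcm by auto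
  have c0: "coeff f 0 = coeff g 0 * coeff h 0" using f by (simp add: coeff_mult_0)
  have g0: "p dvd coeff g 0" using lg dg by auto
  have h0: "p dvd coeff h 0" using lh dh by auto
  have g0': "\<not> p^2 dvd coeff g 0" using coeff0_not_sq[OF p g0 h0] assms(6) c0 by simp
  have h0': "\<not> p^2 dvd coeff h 0" using coeff0_not_sq[OF p h0 g0] assms(6) c0
    by (simp add: mult.commute)
  have eq: "degree g = degree h"
  proof (rule ccontr)
    assume "degree g \<noteq> degree h"
    hence "degree g < degree h \<or> degree h < degree g" by auto
    thus False
    proof
      assume lt: "degree g < degree h"
      have "p^2 dvd coeff f (degree g)" using assms(5) deg lt by auto
      thus False using mid_coeff[OF p lg lh lcg h0' lt] f by simp
    next
      assume lt: "degree h < degree g"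
      have "p^2 dvd coeff f (degree h)" using assms(5) deg lt by auto
      thus False using mid_coeff[OF p lh lg lch g0' lt] f by (simp add: mult.commute)
    qed
  qed
  have eg: "eisenstein_wrt p g" using dg lcg lg g0' unfolding eisenstein_wrt_def by auto
  have eh: "eisenstein_wrt p h" using dh lch lh h0' unfolding eisenstein_wrt_def by auto
  have "even n" using deg eq by auto
  thus ?thesis using f eq eg eh eis_irred[OF p eg] eis_irred[OF p eh] by blast
qed

end
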